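(* Let $p$ be an odd prime, $k\in\{-1,1\}$, $n\ge1$, and let $L_n^k(f,p)$ be a Legendre graph of order $n$. Put $q=\lfloor n/p\rfloor$, $r=n-qp$, $\psi=\max\{0,\,2r-p+1\}$, $\delta_s=1$ if $s$ is even and $\delta_s=0$ if $s$ is odd, and $$\mathcal S_1=\sum_{\substack{s=2\\ s\ne p}}^{r+1}(s-1-\delta_s)(s/p),\qquad \mathcal S_2=\sum_{\substack{s=r+2\\ s\ne p}}^{2r}(2r-s+1-\delta_s)(s/p)$$ (empty sums are $0$). Then the number of edges of $L_n^k(f,p)$ equals $$\frac14\left[n^2-n-2nq+pq^2+q-\psi+k(\mathcal S_1+\mathcal S_2)\right].$$ In particular this number does not depend on the bijection $f$.
   Context: For an odd prime $p$ and an integer $a$ not divisible by $p$, $(a/p)$ denotes the Legendre symbol: $1$ if $a$ is a quadratic residue mod $p$, $-1$ otherwise. For $k\in\{-1,1\}$, a Legendre graph $L_n^k(f,p)$ of order $n$ is a simple graph on an $n$-element vertex set $V$ together with a bijection $f:V\to\{1,2,\dots,n\}$, whose edges are exactly the pairs $\{a,b\}$ of distinct vertices with $p\nmid f(a)+f(b)$ and $((f(a)+f(b))/p)=k$. *)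

theory Defs
  imports "HOL-Number_Theory.Number_Theory"
begin

definition legendre_graph_edges :: "'v set \<Rightarrow> ('v \<Rightarrow> int) \<Rightarrow> int \<Rightarrow> int \<Rightarrow> 'v set set" where
  "legendre_graph_edges V f p k =
     {{a, b} | a b. a \<in> V \<and> b \<in> V \<and> a \<noteq> b \<and> \<not> p dvd (f a + f b)
                  \<and> Legendre (f a + f b) p = k}"

definition delta_even :: "int \<Rightarrow> int" where
  "delta_even s = (if even s then 1 else 0)"

end

theory Submission
  imports Defs
begin

lemma sum_shift_int: "(\<Sum>x\<in>{a..b::int}. g (x + c)) = (\<Sum>s\<in>{a+c..b+c}. g s)"
proof -
  have "(\<Sum>s\<in>{a+c..b+c}. g s) = sum g (plus c ` {a..b})" by simp
  also have "\<dots> = sum (g \<circ> plus c) {a..b}" by (rule sum.reindex) simp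
  finally show ?thesis by (simp add: add.commute)
qed

definition Tsum :: "(int \<Rightarrow> int) \<Rightarrow> int \<Rightarrow> int" where
  "Tsum g m = (\<Sum>y\<in>{1..m}. \<Sum>x\<in>{1..y-1}. g (x+y))"
definition Dlt :: "(int \<Rightarrow> int) \<Rightarrow> int \<Rightarrow> int" where
  "Dlt g m = (\<Sum>x\<in>{1..m}. g (x+m+1))"
definition cf :: "int \<Rightarrow> int \<Rightarrow> int" where
  "cf m s = (if s \<le> m+1 then s-1-delta_even s else 2*m-s+1-delta_even s)"

lemma Icc_insert_top: "a \<le> b + 1 \<Longrightarrow> {a..b+1} = insert (b+1) {a..b::int}"
  by auto

lemma Tsum_step: "0 \<le> m \<Longrightarrow> Tsum g (m+1) = Tsum g m + Dlt g m"
  unfolding Tsum_def Dlt_def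
  by (simp add: Icc_insert_top add.assoc)

lemma Tsum_0: "Tsum g 0 = 0" by (simp add: Tsum_def)

lemma Dlt_shift: "Dlt g m = (\<Sum>s\<in>{m+2..2*m+1}. g s)"
  unfolding Dlt_def using sum_shift_int[where g=g and a=1 and b=m and c="m+1"]
  by (simp add: add.assoc algebra_simps)

lemma cf_diff: "cf (m+1) s - cf m s = (if m+2 \<le> s then 2 else 0)"
  unfolding cf_def by auto

lemma delta_even_simps: "delta_even (2*m+2) = 1" "delta_even (2*m+3) = 0"
  unfolding delta_even_def by auto

lemma G_step:
  assumes "0 \<le> m"
  shows "(\<Sum>s\<in>{2..2*(m+1)+1}. cf (m+1) s * g s) - (\<Sum>s\<in>{2..2*m+1}. cf m s * g s)
       = 2 * Dlt g m"
proof -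
  have e: "{2..2*(m+1)+1} = insert (2*m+3) (insert (2*m+2) {2..2*m+1})"
    using assms by auto
  have c1: "cf (m+1) (2*m+3) = 0" "cf (m+1) (2*m+2) = 0"
    unfolding cf_def using delta_even_simps[of m] assms by auto
  have "(\<Sum>s\<in>{2..2*(m+1)+1}. cf (m+1) s * g s) = (\<Sum>s\<in>{2..2*m+1}. cf (m+1) s * g s)"
    unfolding e using c1 by simp
  then have "(\<Sum>s\<in>{2..2*(m+1)+1}. cf (m+1) s * g s) - (\<Sum>s\<in>{2..2*m+1}. cf m s * g s)
     = (\<Sum>s\<in>{2..2*m+1}. (cf (m+1) s - cf m s) * g s)"
    by (simp add: sum_subtractf left_diff_distrib)
  also have "\<dots> = (\<Sum>s\<in>{2..2*m+1}. (if m+2 \<le> s then 2 * g s else 0))"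
    by (rule sum.cong) (auto simp: cf_diff)
  also have "\<dots> = (\<Sum>s\<in>{s\<in>{2..2*m+1}. m+2 \<le> s}. 2 * g s)"
    by (rule sum.inter_filter[symmetric]) simp
  also have "{s\<in>{2..2*m+1}. m+2 \<le> s} = {m+2..2*m+1}" using assms by auto
  finally show ?thesis by (simp add: Dlt_shift sum_distrib_left)
qed

lemma T_G: "0 \<le> m \<Longrightarrow> 2 * Tsum g m = (\<Sum>s\<in>{2..2*m+1}. cf m s * g s)"
proof (induction m rule: int_ge_induct)
  case base
  then show ?case by (simp add: Tsum_0)
next
  case (step i)
  show ?case using G_step[of i g] step Tsum_step[of i g] by simp
qed

lemma G_split:
  assumes "0 \<le> m"
  shows "(\<Sum>s\<in>{2..2*m+1}. cf m s * g s) =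
     (\<Sum>s \<in> {2..m+1}. (s - 1 - delta_even s) * g s) + (\<Sum>s \<in> {m+2..2*m}. (2 * m - s + 1 - delta_even s) * g s)"
proof -
  have "(\<Sum>s\<in>{2..2*m+1}. cf m s * g s) = (\<Sum>s\<in>{2..2*m}. cf m s * g s)"
  proof (cases "m = 0")
    case False
    then have "{2..2*m+1} = insert (2*m+1) {2..2*m}" using assms by auto
    moreover have "cf m (2*m+1) = 0" unfolding cf_def delta_even_def using False assms by auto
    ultimately show ?thesis by simp
  qed simp
  also have "\<dots> = (\<Sum>s\<in>{2..2*m}. (if s \<le> m+1 then (s-1-delta_even s) * g s else (2*m-s+1-delta_even s) * g s))"
    by (rule sum.cong) (auto simp: cf_def)
  also have "\<dots> = (\<Sum>s\<in>{2..2*m} \<inter> {s. s \<le> m+1}. (s-1-delta_even s) * g s) + (\<Sum>s\<in>{2..2*m} \<inter> - {s. s \<le> m+1}. (2*m-s+1-delta_even s) * g s)"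
    by (rule sum.If_cases) simp
  also have "{2..2*m} \<inter> {s. s \<le> m+1} = {2..m+1}" using assms by auto
  also have "{2..2*m} \<inter> - {s. s \<le> m+1} = {m+2..2*m}" using assms by auto
  finally show ?thesis .
qed

lemma divmod_step1:
  assumes "(0::int) < p" "n mod p + 1 < p"
  shows "(n+1) div p = n div p" "(n+1) mod p = n mod p + 1"
proof -
  have e: "n + 1 = (n mod p + 1) + (n div p) * p" by simp
  have "(n mod p + 1) div p = 0" using assms by (simp add: div_pos_pos_trivial)
  moreover have "(n+1) div p = n div p + (n mod p + 1) div p"
    by (subst e, rule div_mult_self1) (use assms in simp)
  ultimately show "(n+1) div p = n div p" by simp
  have "(n mod p + 1) mod p = n mod p + 1" using assms by (simp add: mod_pos_pos_trivial)
  moreover have "(n+1) mod p = (n mod p + 1) mod p"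
    by (subst e, rule mod_mult_self1)
  ultimately show "(n+1) mod p = n mod p + 1" by simp
qed

lemma divmod_step2:
  assumes "(0::int) < p" "n mod p + 1 = p"
  shows "(n+1) div p = n div p + 1" "(n+1) mod p = 0"
proof -
  have e: "n + 1 = (n div p + 1) * p" using assms
    by (metis add.assoc add.commute distrib_right mult_1 div_mult_mod_eq)
  show "(n+1) div p = n div p + 1" using assms by (subst e) simp
  show "(n+1) mod p = 0" using assms by (subst e) simp
qed

definition per :: "int \<Rightarrow> (int \<Rightarrow> int) \<Rightarrow> bool" where
  "per p h \<longleftrightarrow> (\<forall>x. h x = h (x mod p))"

lemma per_sum:
  assumes "(0::int) < p" "per p h" "0 \<le> m"
  shows "(\<Sum>x\<in>{1..m}. h x) = (m div p) * (\<Sum>x\<in>{1..p}. h x) + (\<Sum>x\<in>{1..m mod p}. h x)"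
  using assms(3)
proof (induction m rule: int_ge_induct)
  case base
  then show ?case by simp
next
  case (step i)
  have hi: "h (i+1) = h ((i+1) mod p)" using assms(2) per_def by blast
  have s: "(\<Sum>x\<in>{1..i+1}. h x) = (\<Sum>x\<in>{1..i}. h x) + h (i+1)"
    using step(1) by (simp add: Icc_insert_top)
  have r: "0 \<le> i mod p" "i mod p < p" using assms(1) by auto
  show ?case
  proof (cases "i mod p + 1 < p")
    case True
    note d = divmod_step1[OF assms(1) True]
    show ?thesis unfolding d using s step(2) hi r d by (simp add: Icc_insert_top)
  next
    case False
    then have F: "i mod p + 1 = p" using r by linarith
    note d = divmod_step2[OF assms(1) F]
    have "h (i+1) = h p" using hi d assms(2) per_def by (metis mod_self)
    moreover have "(\<Sum>x\<in>{1..p}. h x) = (\<Sum>x\<in>{1..i mod p}. h x) + h p"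
      using F r by (metis Icc_insert_top add.commute le_add_same_cancel1 sum.insert finite_atLeastAtMost atLeastAtMost_iff less_add_one not_le order_le_less)
    ultimately show ?thesis unfolding d using s step(2) by (simp add: algebra_simps)
  qed
qed

lemma sum_split_int:
  assumes "0 \<le> a" "0 \<le> b"
  shows "(\<Sum>x\<in>{1..a+b}. h x) = (\<Sum>x\<in>{1..a::int}. h x) + (\<Sum>x\<in>{1..b}. h (x+a))"
proof -
  have "{1..a+b} = {1..a} \<union> {a+1..a+b}" using assms by auto
  moreover have "{1..a} \<inter> {a+1..a+b} = {}" by auto
  ultimately have "(\<Sum>x\<in>{1..a+b}. h x) = (\<Sum>x\<in>{1..a}. h x) + (\<Sum>x\<in>{a+1..a+b}. h x)"
    by (simp add: sum.union_disjoint)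
  also have "(\<Sum>x\<in>{a+1..a+b}. h x) = (\<Sum>x\<in>{1..b}. h (x+a))"
    using sum_shift_int[where g=h and a=1 and b=b and c=a] by (simp add: add.commute)
  finally show ?thesis .
qed

lemma per_shift:
  assumes "(0::int) < p" "per p h" "0 \<le> c"
  shows "(\<Sum>x\<in>{1..p}. h (x+c)) = (\<Sum>x\<in>{1..p}. h x)"
proof -
  have "(\<Sum>x\<in>{1..c+p}. h x) = (\<Sum>x\<in>{1..c}. h x) + (\<Sum>x\<in>{1..p}. h (x+c))"
    using sum_split_int[of c p h] assms by simp
  moreover have "(\<Sum>x\<in>{1..c+p}. h x) = ((c+p) div p) * (\<Sum>x\<in>{1..p}. h x) + (\<Sum>x\<in>{1..(c+p) mod p}. h x)"
    using per_sum[of p h "c+p"] assms by simp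
  moreover have "(\<Sum>x\<in>{1..c}. h x) = (c div p) * (\<Sum>x\<in>{1..p}. h x) + (\<Sum>x\<in>{1..c mod p}. h x)"
    using per_sum[of p h c] assms by simp
  moreover have "(c+p) div p = c div p + 1" "(c+p) mod p = c mod p" using assms by simp_all
  ultimately show ?thesis by (simp add: algebra_simps)
qed

lemma Dlt_per:
  assumes "(0::int) < p" "per p g" "0 \<le> n"
  shows "Dlt g n = (n div p) * (\<Sum>x\<in>{1..p}. g x) + Dlt g (n mod p)"
proof -
  have ph: "per p (\<lambda>x. g (x+n+1))" unfolding per_def
  proof
    fix x
    have "g (x+n+1) = g ((x+n+1) mod p)" using assms(2) per_def by blast
    also have "\<dots> = g ((x mod p + n + 1) mod p)" by (metis add.assoc mod_add_left_eq)
    also have "\<dots> = g (x mod p + n + 1)" using assms(2) per_def by metis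
    finally show "g (x+n+1) = g (x mod p + n + 1)" .
  qed
  have "Dlt g n = (n div p) * (\<Sum>x\<in>{1..p}. g (x+n+1)) + (\<Sum>x\<in>{1..n mod p}. g (x+n+1))"
    unfolding Dlt_def using per_sum[OF assms(1) ph assms(3)] by simp
  moreover have "(\<Sum>x\<in>{1..p}. g (x+n+1)) = (\<Sum>x\<in>{1..p}. g x)"
    using per_shift[OF assms(1) assms(2), of "n+1"] assms by (simp add: add.assoc)
  moreover have "(\<Sum>x\<in>{1..n mod p}. g (x+n+1)) = Dlt g (n mod p)"
    unfolding Dlt_def
  proof (rule sum.cong)
    fix x
    have "g (x+n+1) = g ((x+n+1) mod p)" using assms(2) per_def by blast
    also have "\<dots> = g ((x + n mod p + 1) mod p)" by (metis add.assoc add.commute mod_add_left_eq)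
    also have "\<dots> = g (x + n mod p + 1)" using assms(2) per_def by metis
    finally show "g (x+n+1) = g (x + n mod p + 1)" .
  qed simp
  ultimately show ?thesis by simp
qed

lemma L_mod: "Legendre a p = Legendre (a mod p) p"
  unfolding Legendre_def QuadRes_def cong_def by simp

lemma L_per: "per p (\<lambda>s. Legendre s p)"
  unfolding per_def using L_mod by blast

lemma QR_image:
  assumes "prime (p::int)" "odd p"
  shows "{a\<in>{1..p-1}. QuadRes p a} = (\<lambda>y. y^2 mod p) ` {1..(p-1) div 2}"
proof -
  have p2: "p \<ge> 3" using assms prime_ge_2_int[OF assms(1)] by presburger
  show ?thesis
  proof (intro equalityI subsetI)
    fix a assume "a \<in> {a\<in>{1..p-1}. QuadRes p a}"
    then have a: "1 \<le> a" "a \<le> p-1" and "QuadRes p a" by auto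
    then obtain y where y: "[y^2 = a] (mod p)" unfolding QuadRes_def by blast
    define z where "z = y mod p"
    have z: "[z^2 = a] (mod p)" using y unfolding z_def cong_def by (simp add: power_mod)
    have amod: "a mod p = a" using a by simp
    have z0: "0 \<le> z" "z < p" unfolding z_def using p2 by auto
    have "z \<noteq> 0" using z a amod unfolding cong_def by auto
    show "a \<in> (\<lambda>y. y^2 mod p) ` {1..(p-1) div 2}"
    proof (cases "z \<le> (p-1) div 2")
      case True
      have "a = z^2 mod p" using z amod unfolding cong_def by simp
      moreover have "z \<in> {1..(p-1) div 2}" using True z0 \<open>z \<noteq> 0\<close> by simp
      ultimately show ?thesis by (rule image_eqI)
    next
      case False
      have "(p-z)^2 = z^2 + p*(p - 2*z)" by (simp add: power2_eq_square algebra_simps)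
      then have "(p-z)^2 mod p = z^2 mod p" by simp
      then have "a = (p-z)^2 mod p" using z amod unfolding cong_def by simp
      moreover have "p - z \<in> {1..(p-1) div 2}"
      proof -
        define t where "t = (p-1) div 2"
        have "t < z" using False unfolding t_def by simp
        moreover have "p = 2*t + 1" unfolding t_def using assms(2) by presburger
        ultimately have "1 \<le> p - z" "p - z \<le> t" using z0 by linarith+
        then show ?thesis unfolding t_def by simp
      qed
      ultimately show ?thesis by (rule image_eqI)
    qed
  next
    fix a assume "a \<in> (\<lambda>y. y^2 mod p) ` {1..(p-1) div 2}"
    then obtain y where y: "1 \<le> y" "y \<le> (p-1) div 2" "a = y^2 mod p" by auto
    have hp: "(p-1) div 2 < p" using p2 by presburger
    have "\<not> p dvd y"
    proof
      assume "p dvd y"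
      then have "p \<le> y" using zdvd_imp_le y by auto
      then show False using y hp by linarith
    qed
    then have "\<not> p dvd y^2" using prime_dvd_power[OF assms(1)] by blast
    then have "a \<noteq> 0" using y by (simp add: dvd_eq_mod_eq_0)
    moreover have "0 \<le> a" "a < p" using y p2 by auto
    moreover have "QuadRes p a" unfolding QuadRes_def cong_def using y by auto
    ultimately show "a \<in> {a\<in>{1..p-1}. QuadRes p a}" by auto
  qed
qed

lemma QR_inj:
  assumes "prime (p::int)" "odd p"
  shows "inj_on (\<lambda>y. y^2 mod p) {1..(p-1) div 2}"
proof
  fix x y assume x: "x \<in> {1..(p-1) div 2}" and y: "y \<in> {1..(p-1) div 2}"
    and e: "x^2 mod p = y^2 mod p"
  have "p dvd x^2 - y^2" using e by (simp add: mod_eq_dvd_iff)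
  moreover have "x^2 - y^2 = (x - y) * (x + y)" by (simp add: power2_eq_square algebra_simps)
  ultimately have "p dvd (x-y) \<or> p dvd (x+y)" using assms(1) prime_dvd_mult_iff by metis
  moreover have "\<not> p dvd (x+y)"
  proof
    assume "p dvd (x+y)"
    then have "p \<le> x+y" using zdvd_imp_le x y by auto
    moreover have "x + y < p" using x y by auto
    ultimately show False by linarith
  qed
  moreover have "p dvd (x-y) \<Longrightarrow> x = y"
  proof -
    assume "p dvd (x-y)"
    then obtain t where t: "x - y = p * t" by blast
    have p0: "0 < p" using assms(1) prime_gt_0_int by blast
    have "\<bar>x - y\<bar> < p" using x y by auto
    have "t = 0"
    proof (rule ccontr)
      assume "t \<noteq> 0"
      then have "1 \<le> \<bar>t\<bar>" by simp
      then have "p * 1 \<le> p * \<bar>t\<bar>" using p0 by (intro mult_left_mono) auto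
      moreover have "\<bar>x - y\<bar> = p * \<bar>t\<bar>" using t p0 by (simp add: abs_mult)
      ultimately show False using \<open>\<bar>x - y\<bar> < p\<close> by linarith
    qed
    then show "x = y" using t by simp
  qed
  ultimately show "x = y" by blast
qed

lemma QR_card:
  assumes "prime (p::int)" "odd p"
  shows "card {a\<in>{1..p-1}. QuadRes p a} = nat ((p-1) div 2)"
proof -
  have "card ((\<lambda>y. y^2 mod p) ` {1..(p-1) div 2}) = card {1..(p-1) div 2}"
    by (rule card_image[OF QR_inj[OF assms]])
  then show ?thesis unfolding QR_image[OF assms] by (simp add: nat_int)
qed

lemma L_sum0:
  assumes "prime (p::int)" "odd p"
  shows "(\<Sum>x\<in>{1..p}. Legendre x p) = 0"
proof -
  have p2: "p \<ge> 3" using assms prime_ge_2_int[OF assms(1)] by presburger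
  have "{1..p} = insert p {1..p-1}" using p2 by auto
  moreover have "Legendre p p = 0" unfolding Legendre_def cong_def by simp
  ultimately have "(\<Sum>x\<in>{1..p}. Legendre x p) = (\<Sum>x\<in>{1..p-1}. Legendre x p)" by simp
  also have "\<dots> = (\<Sum>x\<in>{1..p-1}. if QuadRes p x then 1 else -1)"
    by (rule sum.cong) (auto simp: Legendre_def cong_def)
  also have "\<dots> = (\<Sum>x\<in>{a\<in>{1..p-1}. QuadRes p a}. 1) + (\<Sum>x\<in>{a\<in>{1..p-1}. \<not> QuadRes p a}. -1)"
    by (rule sum.If_cases[THEN trans]) (simp_all add: Int_def)
  also have "\<dots> = int (card {a\<in>{1..p-1}. QuadRes p a}) - int (card {a\<in>{1..p-1}. \<not> QuadRes p a})"
    by simp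
  finally have e: "(\<Sum>x\<in>{1..p}. Legendre x p) = int (card {a\<in>{1..p-1}. QuadRes p a}) - int (card {a\<in>{1..p-1}. \<not> QuadRes p a})" .
  define Q where "Q = {a\<in>{1..p-1}. QuadRes p a}"
  have "{a\<in>{1..p-1}. \<not> QuadRes p a} = {1..p-1} - Q" unfolding Q_def by auto
  moreover have "Q \<subseteq> {1..p-1}" unfolding Q_def by auto
  moreover then have "finite Q" using finite_subset by blast
  ultimately have "card {a\<in>{1..p-1}. \<not> QuadRes p a} = card {1..p-1} - card Q"
    using card_Diff_subset by metis
  moreover have "card Q \<le> card {1..p-1}" unfolding Q_def by (intro card_mono) auto
  moreover have "int (card {1..p-1}) = p - 1" using p2 by simp
  moreover have "int (card Q) = (p-1) div 2" using QR_card[OF assms] p2 unfolding Q_def by simp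
  moreover have "2 * ((p-1) div 2) = p - 1" using assms(2) by presburger
  ultimately show ?thesis unfolding e Q_def[symmetric] by (simp add: of_nat_diff)
qed

definition Dd :: "int \<Rightarrow> int \<Rightarrow> int" where "Dd p s = (if p dvd s then 1 else 0)"

lemma Dd_per: "0 < p \<Longrightarrow> per p (Dd p)"
  unfolding per_def Dd_def by (simp add: dvd_mod_iff)

lemma dvd_range: "0 < (s::int) \<Longrightarrow> s < 2*p \<Longrightarrow> p dvd s \<Longrightarrow> s = p"
proof -
  assume a: "0 < s" "s < 2*p" "p dvd s"
  then obtain j where j: "s = p * j" by blast
  have p0: "0 < p" using a by linarith
  have "0 < j" using a j p0 zero_less_mult_pos by blast
  moreover have "p * j < p * 2" using a j by (simp add: mult.commute)
  then have "j < 2" using mult_less_cancel_left_pos[OF p0] by blast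
  ultimately have "j = 1" by linarith
  then show "s = p" using j by simp
qed

lemma Dd_sum1:
  assumes "0 < p"
  shows "(\<Sum>x\<in>{1..p}. Dd p x) = 1"
proof -
  have "(\<Sum>x\<in>{1..p}. Dd p x) = (\<Sum>x\<in>{1..p}. if x = p then 1 else 0)"
  proof (rule sum.cong)
    fix x assume x: "x \<in> {1..p}"
    have "p dvd x \<longleftrightarrow> x = p" using x dvd_range[of x p] by auto
    then show "Dd p x = (if x = p then 1 else 0)" unfolding Dd_def by simp
  qed simp
  also have "\<dots> = 1" using assms by (simp add: sum.delta)
  finally show ?thesis .
qed

lemma Dlt_Dd_small:
  assumes "0 \<le> r" "r < p"
  shows "Dlt (Dd p) r = (if r + 2 \<le> p \<and> p \<le> 2*r+1 then 1 else 0)"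
proof -
  have "Dlt (Dd p) r = (\<Sum>x\<in>{1..r}. if x = p - r - 1 then 1 else 0)"
    unfolding Dlt_def
  proof (rule sum.cong)
    fix x assume x: "x \<in> {1..r}"
    have "p dvd (x+r+1) \<longleftrightarrow> x + r + 1 = p" using x assms dvd_range[of "x+r+1" p] by auto
    then show "Dd p (x+r+1) = (if x = p - r - 1 then 1 else 0)" unfolding Dd_def by auto
  qed simp
  also have "\<dots> = (if p - r - 1 \<in> {1..r} then 1 else 0)" by (simp add: sum.delta)
  finally show ?thesis by auto
qed

lemma even_odd_split:
  "0 \<le> (m::int) \<Longrightarrow> (\<Sum>s\<in>{1..2*m}. h s) = (\<Sum>x\<in>{1..m}. h (2*x) + h (2*x-1))"
proof (induction m rule: int_ge_induct)
  case base
  then show ?case by simp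
next
  case (step i)
  have e: "{1..2*(i+1)} = insert (2*i+2) (insert (2*i+1) {1..2*i})" using step(1) by auto
  have e2: "(\<Sum>x\<in>{1..i+1}. h (2*x) + h (2*x-1)) = (\<Sum>x\<in>{1..i}. h (2*x) + h (2*x-1)) + (h (2*(i+1)) + h (2*(i+1)-1))"
  proof -
    have "{1..i+1} = insert (i+1) {1..i}" using step(1) by auto
    then show ?thesis by (subst \<open>{1..i+1} = _\<close>, subst sum.insert) (auto simp: ac_simps)
  qed
  have "2*(i+1) = 2*i+2" "2*(i+1)-1 = 2*i+1" by simp_all
  then show ?case unfolding e e2 using step by (simp add: ac_simps)
qed

lemma diag_zero:
  assumes "prime (p::int)" "odd p"
  shows "(\<Sum>x\<in>{1..p}. Legendre (2*x) p) = 0"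
proof -
  have p2: "p \<ge> 3" using assms prime_ge_2_int[OF assms(1)] by presburger
  have p0: "0 < p" using p2 by simp
  have perL: "per p (\<lambda>s. Legendre s p)" by (rule L_per)
  have s0: "(\<Sum>x\<in>{1..p}. Legendre x p) = 0" by (rule L_sum0[OF assms])
  have "(\<Sum>s\<in>{1..p+p}. Legendre s p) = (\<Sum>x\<in>{1..p}. Legendre x p) + (\<Sum>x\<in>{1..p}. Legendre (x+p) p)"
    using sum_split_int[of p p] p2 by simp
  also have "(\<Sum>x\<in>{1..p}. Legendre (x+p) p) = 0"
    using per_shift[OF p0 perL, of p] p2 s0 by simp
  finally have X: "(\<Sum>s\<in>{1..p+p}. Legendre s p) = (\<Sum>x\<in>{1..p}. Legendre x p) + 0" .
  have "(\<Sum>s\<in>{1..2*p}. Legendre s p) = 0" unfolding mult_2 X s0 by simp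
  then have A: "(\<Sum>x\<in>{1..p}. Legendre (2*x) p) + (\<Sum>x\<in>{1..p}. Legendre (2*x-1) p) = 0"
    using even_odd_split[of p "\<lambda>s. Legendre s p"] p2 by (simp add: sum.distrib)
  have per2: "per p (\<lambda>x. Legendre (2*x) p)" unfolding per_def
  proof
    fix x
    have "Legendre (2*x) p = Legendre ((2*x) mod p) p" by (rule L_mod)
    also have "(2*x) mod p = (2*(x mod p)) mod p" by (simp add: mod_mult_right_eq)
    also have "Legendre \<dots> p = Legendre (2*(x mod p)) p" by (rule L_mod[symmetric])
    finally show "Legendre (2*x) p = Legendre (2*(x mod p)) p" .
  qed
  define c where "c = (p-1) div 2"
  have pc: "p = 2*c + 1" unfolding c_def using assms(2) by presburger
  have c0: "0 \<le> c" using p2 pc by linarith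
  have "(\<Sum>x\<in>{1..p}. Legendre (2*x-1) p) = (\<Sum>x\<in>{1..p}. Legendre (2*(x+c)) p)"
  proof (rule sum.cong)
    fix x
    have "Legendre (2*x-1) p = Legendre ((2*x-1) mod p) p" by (rule L_mod)
    also have "(2*x-1) mod p = (2*x - 1 + p) mod p" by simp
    also have "2*x - 1 + p = 2*(x+c)" using pc by simp
    also have "Legendre ((2*(x+c)) mod p) p = Legendre (2*(x+c)) p" by (rule L_mod[symmetric])
    finally show "Legendre (2*x-1) p = Legendre (2*(x+c)) p" .
  qed simp
  also have "\<dots> = (\<Sum>x\<in>{1..p}. Legendre (2*x) p)"
    using per_shift[OF p0 per2 c0] by simp
  finally show ?thesis using A by simp
qed

definition Usum :: "(int \<Rightarrow> int) \<Rightarrow> int \<Rightarrow> int" where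
  "Usum g m = (\<Sum>x\<in>{1..m}. \<Sum>y\<in>{1..m}. g (x+y))"

lemma U_T: "0 \<le> m \<Longrightarrow> Usum g m = 2 * Tsum g m + (\<Sum>x\<in>{1..m}. g (2*x))"
proof (induction m rule: int_ge_induct)
  case base
  then show ?case by (simp add: Usum_def Tsum_def)
next
  case (step i)
  let ?S = "{1..i}"
  have fin: "finite ?S" by simp
  have ni: "i+1 \<notin> ?S" by simp
  have "Usum g (i+1) = (\<Sum>x\<in>insert (i+1) ?S. \<Sum>y\<in>insert (i+1) ?S. g (x+y))"
    unfolding Usum_def using step(1) by (simp add: Icc_insert_top)
  also have "\<dots> = (g (2*i+2) + (\<Sum>y\<in>?S. g (i+1+y))) + (\<Sum>x\<in>?S. g (x+(i+1)) + (\<Sum>y\<in>?S. g (x+y)))"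
    using fin ni by (simp add: algebra_simps)
  also have "\<dots> = g (2*i+2) + 2 * Dlt g i + Usum g i"
    unfolding Usum_def Dlt_def by (simp add: sum.distrib algebra_simps)
  finally have "Usum g (i+1) = g (2*i+2) + 2 * Dlt g i + Usum g i" .
  moreover have "(\<Sum>x\<in>{1..i+1}. g (2*x)) = (\<Sum>x\<in>{1..i}. g (2*x)) + g (2*(i+1))"
    using step(1) by (simp add: Icc_insert_top)
  moreover have "2*(i+1) = 2*i+2" by simp
  ultimately show ?case using step Tsum_step[of i g] by simp
qed

lemma TL_p:
  assumes "prime (p::int)" "odd p"
  shows "Tsum (\<lambda>s. Legendre s p) p = 0"
proof -
  have p2: "p \<ge> 3" using assms prime_ge_2_int[OF assms(1)] by presburger
  have p0: "0 < p" using p2 by simp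
  have "Usum (\<lambda>s. Legendre s p) p = (\<Sum>x\<in>{1..p}. \<Sum>y\<in>{1..p}. Legendre (y+x) p)"
    unfolding Usum_def by (simp add: add.commute)
  also have "\<dots> = (\<Sum>x\<in>{1..p}. 0)"
    by (rule sum.cong) (use per_shift[OF p0 L_per] L_sum0[OF assms] in auto)
  finally have "Usum (\<lambda>s. Legendre s p) p = 0" by simp
  then show ?thesis using U_T[of p "\<lambda>s. Legendre s p"] diag_zero[OF assms] p2 by simp
qed

lemma TL_red:
  assumes "prime (p::int)" "odd p" "0 \<le> n"
  shows "Tsum (\<lambda>s. Legendre s p) n = Tsum (\<lambda>s. Legendre s p) (n mod p)"
  using assms(3)
proof (induction n rule: int_ge_induct)
  case base
  then show ?case by simp
next
  case (step i)
  have p2: "p \<ge> 3" using assms prime_ge_2_int[OF assms(1)] by presburger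
  have p0: "0 < p" using p2 by simp
  let ?L = "\<lambda>s. Legendre s p"
  have r: "0 \<le> i mod p" "i mod p < p" using p0 by auto
  have "Tsum ?L (i+1) = Tsum ?L (i mod p) + Dlt ?L (i mod p)"
    using Tsum_step[of i ?L] step Dlt_per[OF p0 L_per step(1)] L_sum0[OF assms(1,2)] by simp
  also have "\<dots> = Tsum ?L (i mod p + 1)" using Tsum_step[of "i mod p" ?L] r by simp
  also have "\<dots> = Tsum ?L ((i+1) mod p)"
  proof (cases "i mod p + 1 < p")
    case True
    then show ?thesis using divmod_step1[OF p0 True] by simp
  next
    case False
    then have F: "i mod p + 1 = p" using r by linarith
    show ?thesis using divmod_step2[OF p0 F] F TL_p[OF assms(1,2)] Tsum_0 by simp
  qed
  finally show ?case .
qed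

lemma TD_formula:
  assumes "prime (p::int)" "odd p" "0 \<le> n"
  shows "2 * Tsum (Dd p) n = 2*n*(n div p) - p*(n div p)^2 - (n div p) + max 0 (2*(n mod p) - p + 1)"
  using assms(3)
proof (induction n rule: int_ge_induct)
  case base
  have p2: "p \<ge> 3" using assms prime_ge_2_int[OF assms(1)] by presburger
  then show ?case by (simp add: Tsum_0)
next
  case (step i)
  have p2: "p \<ge> 3" using assms prime_ge_2_int[OF assms(1)] by presburger
  have p0: "0 < p" using p2 by simp
  define q where "q = i div p"
  define r where "r = i mod p"
  have r: "0 \<le> r" "r < p" using p0 unfolding r_def by auto
  have ie: "i = q*p + r" unfolding q_def r_def by simp
  obtain t where pt: "p = 2*t+1" using assms(2) by (metis oddE)
  have T1: "Tsum (Dd p) (i+1) = Tsum (Dd p) i + q + Dlt (Dd p) r"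
    using Tsum_step[of i "Dd p"] step(1) Dlt_per[OF p0 Dd_per[OF p0] step(1)] Dd_sum1[OF p0]
    unfolding q_def r_def by simp
  have IH: "2 * Tsum (Dd p) i = 2*i*q - p*q^2 - q + max 0 (2*r - p + 1)"
    using step(2) unfolding q_def r_def .
  show ?case
  proof (cases "r + 1 < p")
    case True
    have d: "(i+1) div p = q" "(i+1) mod p = r + 1"
      using divmod_step1[OF p0 True[unfolded r_def]] unfolding q_def r_def by auto
    have Dl: "Dlt (Dd p) r = (if p \<le> 2*r+1 then 1 else 0)" using Dlt_Dd_small[OF r] True by simp
    have e1: "2*(i+1)*q = 2*i*q + 2*q" by (simp add: algebra_simps)
    show ?thesis unfolding d using T1 IH Dl e1 pt r by (auto split: if_splits)
  next
    case False
    then have F: "r + 1 = p" using r by linarith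
    have d: "(i+1) div p = q + 1" "(i+1) mod p = 0"
      using divmod_step2[OF p0 F[unfolded r_def]] unfolding q_def r_def by auto
    have Dl: "Dlt (Dd p) r = 0" using Dlt_Dd_small[OF r] F by simp
    have m1: "max 0 (2*r - p + 1) = p - 1" using F p2 by simp
    have m0: "max 0 (2*0 - p + 1) = (0::int)" using p2 by simp
    have ie2: "i = q*p + p - 1" using ie F by simp
    have alg: "2*(i+1)*(q+1) - p*(q+1)^2 - (q+1) = 2*i*q - p*q^2 - q + (p - 1) + 2*q"
      unfolding ie2 by (simp add: power2_eq_square algebra_simps)
    show ?thesis unfolding d using T1 IH Dl m1 m0 alg by simp
  qed
qed

lemma T_one: "0 \<le> m \<Longrightarrow> 2 * Tsum (\<lambda>s. 1) m = m^2 - m"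
proof (induction m rule: int_ge_induct)
  case base
  then show ?case by (simp add: Tsum_0)
next
  case (step i)
  have "Dlt (\<lambda>s. 1) i = i" unfolding Dlt_def using step(1) by simp
  then show ?case using Tsum_step[of i "\<lambda>s. 1"] step by (simp add: power2_eq_square algebra_simps)
qed

lemma Tsum_lin: "Tsum (\<lambda>s. u s - v s + k * w s) m = Tsum u m - Tsum v m + k * Tsum w m"
  unfolding Tsum_def by (simp add: sum.distrib sum_subtractf sum_distrib_left)

lemma Tsum_scale: "Tsum (\<lambda>s. c * u s) m = c * Tsum u m"
  unfolding Tsum_def by (simp add: sum_distrib_left)

lemma int_card_filter: "finite S \<Longrightarrow> int (card {x\<in>S. P x}) = (\<Sum>x\<in>S. if P x then 1 else 0)"
  by (simp add: sum.inter_filter[symmetric])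

lemma sum_remove_zero: "finite S \<Longrightarrow> f a = (0::int) \<Longrightarrow> sum f (S - {a}) = sum f S"
  by (simp add: sum_diff1)

lemma edges_card:
  fixes p k n :: int and V :: "'v set" and f :: "'v \<Rightarrow> int"
  assumes bij: "bij_betw f V {1..n}"
  shows "card (legendre_graph_edges V f p k) =
    card (SIGMA y:{1..n}. {x\<in>{1..y-1}. \<not> p dvd (x+y) \<and> Legendre (x+y) p = k})"
proof -
  define P where "P s \<longleftrightarrow> \<not> p dvd s \<and> Legendre s p = k" for s
  define A where "A = (SIGMA y:{1..n}. {x\<in>{1..y-1}. P (x+y)})"
  define g where "g = inv_into V f"
  define E where "E = legendre_graph_edges V f p k"
  have injf: "inj_on f V" and imf: "f ` V = {1..n}" using bij by (auto simp: bij_betw_def)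
  have gV: "\<And>x. x \<in> {1..n} \<Longrightarrow> g x \<in> V" unfolding g_def using imf by (metis inv_into_into)
  have fg: "\<And>x. x \<in> {1..n} \<Longrightarrow> f (g x) = x" unfolding g_def using imf by (metis f_inv_into_f)
  have gf: "\<And>a. a \<in> V \<Longrightarrow> g (f a) = a" unfolding g_def using injf by (metis inv_into_f_f)
  have fV: "\<And>a. a \<in> V \<Longrightarrow> f a \<in> {1..n}" using imf by blast
  have ginj: "\<And>x y. x \<in> {1..n} \<Longrightarrow> y \<in> {1..n} \<Longrightarrow> g x = g y \<Longrightarrow> x = y" using fg by metis
  have E_def': "E = {{a, b} | a b. a \<in> V \<and> b \<in> V \<and> a \<noteq> b \<and> P (f a + f b)}"
    unfolding E_def legendre_graph_edges_def P_def by simp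
  have "bij_betw (\<lambda>(y,x). {g x, g y}) A E"
    unfolding bij_betw_def
  proof
    show "inj_on (\<lambda>(y,x). {g x, g y}) A"
    proof (rule inj_onI, clarify)
      fix y x y' x'
      assume a1: "(y,x) \<in> A" and a2: "(y',x') \<in> A" and e: "{g x, g y} = {g x', g y'}"
      have r1: "x \<in> {1..n}" "y \<in> {1..n}" "x < y" using a1 unfolding A_def by auto
      have r2: "x' \<in> {1..n}" "y' \<in> {1..n}" "x' < y'" using a2 unfolding A_def by auto
      from e have "(g x = g x' \<and> g y = g y') \<or> (g x = g y' \<and> g y = g x')"
        by (simp add: doubleton_eq_iff)
      then show "y = y' \<and> x = x'"
      proof
        assume "g x = g x' \<and> g y = g y'"
        then show ?thesis using ginj r1 r2 by blast
      next
        assume "g x = g y' \<and> g y = g x'"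
        then have "x = y'" "y = x'" using ginj r1 r2 by blast+
        then show ?thesis using r1 r2 by simp
      qed
    qed
  next
    show "(\<lambda>(y,x). {g x, g y}) ` A = E"
    proof (intro equalityI subsetI)
      fix e assume "e \<in> (\<lambda>(y,x). {g x, g y}) ` A"
      then obtain y x where yx: "(y,x) \<in> A" and e: "e = {g x, g y}" by auto
      have r: "x \<in> {1..n}" "y \<in> {1..n}" "x < y" "P (x+y)" using yx unfolding A_def by auto
      have "g x \<noteq> g y" using ginj r by (metis less_irrefl)
      moreover have "P (f (g x) + f (g y))" using r fg by simp
      ultimately show "e \<in> E" unfolding E_def' e using gV r by blast
    next
      fix e assume "e \<in> E"
      then obtain a b where ab: "e = {a,b}" "a \<in> V" "b \<in> V" "a \<noteq> b" "P (f a + f b)"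
        unfolding E_def' by blast
      have ne: "f a \<noteq> f b" using ab injf by (meson inj_onD)
      show "e \<in> (\<lambda>(y,x). {g x, g y}) ` A"
      proof (cases "f a < f b")
        case True
        have "(f b, f a) \<in> A" unfolding A_def using True fV ab by (auto simp: add.commute)
        moreover have "e = {g (f a), g (f b)}" using ab gf by simp
        ultimately show ?thesis by force
      next
        case False
        then have "f b < f a" using ne by simp
        then have "(f a, f b) \<in> A" unfolding A_def using fV ab by (auto simp: add.commute)
        moreover have "e = {g (f b), g (f a)}" using ab gf by auto
        ultimately show ?thesis by force
      qed
    qed
  qed
  then have "card E = card A" by (simp add: bij_betw_same_card)
  then show ?thesis unfolding E_def A_def P_def .
qed

theorem lemma3p2:
  fixes p k n :: int and V :: "'v set" and f :: "'v \<Rightarrow> int"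
  assumes "prime p" and "odd p" and "k \<in> {-1, 1}" and "n \<ge> 1"
    and "bij_betw f V {1..n}"
  defines "q \<equiv> n div p"
  defines "r \<equiv> n - q * p"
  defines "\<psi> \<equiv> max 0 (2 * r - p + 1)"
  defines "S1 \<equiv> (\<Sum>s \<in> {2..r+1} - {p}. (s - 1 - delta_even s) * Legendre s p)"
  defines "S2 \<equiv> (\<Sum>s \<in> {r+2..2*r} - {p}. (2 * r - s + 1 - delta_even s) * Legendre s p)"
  shows "real (card (legendre_graph_edges V f p k)) =
           real_of_int (n^2 - n - 2*n*q + p*q^2 + q - \<psi> + k * (S1 + S2)) / 4"
proof -
  have p2: "p \<ge> 3" using assms(1,2) prime_ge_2_int[OF assms(1)] by presburger
  have p0: "0 < p" using p2 by simp
  have n0: "0 \<le> n" using assms(4) by simp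
  have rm: "r = n mod p" unfolding r_def q_def by (simp add: minus_div_mult_eq_mod)
  have r0: "0 \<le> r" using rm p0 by simp
  define P where "P s \<longleftrightarrow> \<not> p dvd s \<and> Legendre s p = k" for s
  define Ind where "Ind s = (if P s then 1 else (0::int))" for s
  let ?L = "\<lambda>s. Legendre s p"
  have c1: "int (card (legendre_graph_edges V f p k)) = Tsum Ind n"
  proof -
    have "card (legendre_graph_edges V f p k) = card (SIGMA y:{1..n}. {x\<in>{1..y-1}. P (x+y)})"
      using edges_card[OF assms(5), of p k] unfolding P_def .
    also have "\<dots> = (\<Sum>y\<in>{1..n}. card {x\<in>{1..y-1}. P (x+y)})"
    proof (rule card_SigmaI[OF finite_atLeastAtMost_int], rule ballI)
      fix y :: int
      have "{x\<in>{1..y-1}. P (x+y)} \<subseteq> {1..y-1}" by blast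
      then show "finite {x\<in>{1..y-1}. P (x+y)}" using finite_subset by blast
    qed
    finally have "int (card (legendre_graph_edges V f p k)) = (\<Sum>y\<in>{1..n}. int (card {x\<in>{1..y-1}. P (x+y)}))"
      by simp
    also have "\<dots> = Tsum Ind n"
      unfolding Tsum_def Ind_def by (rule sum.cong[OF refl], rule int_card_filter, simp)
    finally show ?thesis .
  qed
  have pw: "(\<lambda>s. 2 * Ind s) = (\<lambda>s. 1 - Dd p s + k * Legendre s p)"
  proof
    fix s
    show "2 * Ind s = 1 - Dd p s + k * Legendre s p"
    proof (cases "p dvd s")
      case True
      then have "Legendre s p = 0" unfolding Legendre_def cong_def by (simp add: dvd_eq_mod_eq_0)
      then show ?thesis using True unfolding Ind_def P_def Dd_def by simp
    next
      case False
      then have "Legendre s p = 1 \<or> Legendre s p = -1" unfolding Legendre_def cong_def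
        by (auto simp: dvd_eq_mod_eq_0)
      then show ?thesis using False assms(3) unfolding Ind_def P_def Dd_def by auto
    qed
  qed
  have X1: "2 * Tsum Ind n = Tsum (\<lambda>s. 1) n - Tsum (Dd p) n + k * Tsum ?L n"
    using Tsum_scale[of 2 Ind n] Tsum_lin[of "\<lambda>s. 1" "Dd p" k ?L n] pw by simp
  have X2: "2 * Tsum (\<lambda>s. 1) n = n^2 - n" by (rule T_one[OF n0])
  have X3: "2 * Tsum (Dd p) n = 2*n*q - p*q^2 - q + \<psi>"
    using TD_formula[OF assms(1,2) n0] unfolding \<psi>_def rm q_def .
  have X4: "2 * Tsum ?L n = S1 + S2"
  proof -
    have "2 * Tsum ?L n = 2 * Tsum ?L r" using TL_red[OF assms(1,2) n0] rm by simp
    also have "\<dots> = (\<Sum>s\<in>{2..2*r+1}. cf r s * Legendre s p)" by (rule T_G[OF r0])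
    also have "\<dots> = (\<Sum>s \<in> {2..r+1}. (s - 1 - delta_even s) * Legendre s p) + (\<Sum>s \<in> {r+2..2*r}. (2 * r - s + 1 - delta_even s) * Legendre s p)"
      by (rule G_split[OF r0])
    also have "\<dots> = S1 + S2"
    proof -
      have Lp: "Legendre p p = 0" unfolding Legendre_def cong_def by simp
      show ?thesis unfolding S1_def S2_def
        by (subst sum_remove_zero, simp, simp add: Lp)+ simp
    qed
    finally show ?thesis .
  qed
  have "4 * Tsum Ind n = 2 * (2 * Tsum Ind n)" by simp
  also have "\<dots> = 2 * Tsum (\<lambda>s. 1) n - 2 * Tsum (Dd p) n + k * (2 * Tsum ?L n)"
    unfolding X1 by (simp add: algebra_simps)
  also have "\<dots> = n^2 - n - 2*n*q + p*q^2 + q - \<psi> + k * (S1 + S2)"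
    unfolding X2 X3 X4 by simp
  finally have "4 * int (card (legendre_graph_edges V f p k)) = n^2 - n - 2*n*q + p*q^2 + q - \<psi> + k * (S1 + S2)"
    unfolding c1 .
  then have "real_of_int (n^2 - n - 2*n*q + p*q^2 + q - \<psi> + k * (S1 + S2)) = 4 * real (card (legendre_graph_edges V f p k))"
    by (metis of_int_mult of_int_numeral of_int_of_nat_eq)
  then show ?thesis by simp
qed

end
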